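(* Let $k\ge2$, $d=2^k+1$, and let $f(x)=x^d+g(x)$ with $g(x)=\sum_{j=0}^{2^{k-1}+1}a_jx^j\in\mathbb{F}_q[x]$. Suppose there is an index $j$ with $a_j\neq0$ such that $\phi_j(x,y,z)$ is nonzero and relatively prime to $\phi_d(x,y,z)$ in $\overline{\mathbb{F}_q}[x,y,z]$. Then $\phi(x,y,z)$ is absolutely irreducible.
   Context: Let $q=2^m$. For an integer $j\ge0$ let $\phi_j(x,y,z)=\dfrac{x^j+y^j+z^j+(x+y+z)^j}{(x+y)(x+z)(y+z)}$, a homogeneous polynomial of degree $j-3$ over $\mathbb{F}_2$. For $f\in\mathbb{F}_q[x]$ let $\phi(x,y,z)=\dfrac{f(x)+f(y)+f(z)+f(x+y+z)}{(x+y)(x+z)(y+z)}\in\mathbb{F}_q[x,y,z]$. Absolutely irreducible means irreducible (and nonconstant) over $\overline{\mathbb{F}_q}$. *)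

theory Defs
  imports "HOL-Computational_Algebra.Computational_Algebra" "HOL-Algebra.Algebraic_Closure_Type"
begin

text \<open>Trivariate polynomials K[x,y,z] are represented as nested univariate
  polynomials K[x][y][z], i.e. the type K poly poly poly; x is the innermost
  variable and z the outermost one.\<close>

definition tvC :: "'b::comm_ring_1 \<Rightarrow> 'b poly poly poly" where
  "tvC c = [:[:[:c:]:]:]"

definition tvX :: "'b::comm_ring_1 poly poly poly" where
  "tvX = [:[:[:0, 1:]:]:]"

definition tvY :: "'b::comm_ring_1 poly poly poly" where
  "tvY = [:[:0, 1:]:]"

definition tvZ :: "'b::comm_ring_1 poly poly poly" where
  "tvZ = [:0, 1:]"

definition eval3 :: "'b::comm_ring_1 poly \<Rightarrow> 'b poly poly poly \<Rightarrow> 'b poly poly poly" where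
  "eval3 p t = poly (map_poly tvC p) t"

definition denom3 :: "'b::comm_ring_1 poly poly poly" where
  "denom3 = (tvX + tvY) * (tvX + tvZ) * (tvY + tvZ)"

definition phi_pow :: "nat \<Rightarrow> 'b::field poly poly poly" where
  "phi_pow j = (tvX ^ j + tvY ^ j + tvZ ^ j + (tvX + tvY + tvZ) ^ j) div denom3"

definition phi_of :: "'b::field poly \<Rightarrow> 'b poly poly poly" where
  "phi_of f = (eval3 f tvX + eval3 f tvY + eval3 f tvZ + eval3 f (tvX + tvY + tvZ)) div denom3"

end

theory Submission
  imports Defs "HOL-Number_Theory.Residues"
begin


definition rhom :: "('x::comm_ring_1 \<Rightarrow> 'y::comm_ring_1) \<Rightarrow> bool" where
  "rhom f \<longleftrightarrow> f 0 = 0 \<and> f 1 = 1 \<and> (\<forall>a b. f (a+b) = f a + f b) \<and> (\<forall>a b. f (a*b) = f a * f b)"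

lemma rhomD:
  assumes "rhom f"
  shows "f 0 = 0" "f 1 = 1" "f (a+b) = f a + f b" "f (a*b) = f a * f b"
  using assms unfolding rhom_def by auto

lemma rhom_minus: "rhom f \<Longrightarrow> f (- a) = - f a"
  by (metis add.inverse_unique add.right_inverse rhomD(1,3))
lemma rhom_diff: "rhom f \<Longrightarrow> f (a - b) = f a - f b"
  by (metis diff_conv_add_uminus rhomD(3) rhom_minus)
lemma rhom_power: "rhom f \<Longrightarrow> f (a ^ n) = f a ^ n"
  by (induction n) (auto simp: rhomD)
lemma rhom_sum: "rhom f \<Longrightarrow> f (sum g A) = (\<Sum>x\<in>A. f (g x))"
  by (induction A rule: infinite_finite_induct) (auto simp: rhomD)
lemma rhom_of_nat: "rhom f \<Longrightarrow> f (of_nat n) = of_nat n"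
  by (induction n) (auto simp: rhomD)
lemma rhom_dvd: "rhom f \<Longrightarrow> a dvd b \<Longrightarrow> f a dvd f b"
  by (metis dvd_def rhomD(4))
lemma rhom_unit: "rhom f \<Longrightarrow> is_unit a \<Longrightarrow> is_unit (f a)"
  by (metis rhomD(2) rhom_dvd)

lemma rhom_id: "rhom (\<lambda>x. x)" by (simp add: rhom_def)
lemma rhom_comp: "rhom f \<Longrightarrow> rhom g \<Longrightarrow> rhom (f \<circ> g)"
  by (simp add: rhom_def)
lemma rhom_poly: "rhom (\<lambda>p. poly p a)"
  by (simp add: rhom_def)
lemma rhom_const: "rhom (\<lambda>a. [:a:])"
  by (simp add: rhom_def one_pCons)

lemma rhom_map_poly:
  assumes f: "rhom f"
  shows "rhom (map_poly f)"
proof -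
  have add: "map_poly f (p + q) = map_poly f p + map_poly f q" for p q
    by (rule poly_eqI) (simp add: coeff_map_poly rhomD[OF f])
  have mult: "map_poly f (p * q) = map_poly f p * map_poly f q" for p q
    by (rule poly_eqI) (simp add: coeff_map_poly rhomD[OF f] coeff_mult rhom_sum[OF f])
  show ?thesis unfolding rhom_def using add mult rhomD[OF f]
    by (simp add: map_poly_1)
qed

lemma pCons_as: "pCons a p = [:a:] + [:0,1:] * (p :: 'a::comm_ring_1 poly)"
  by simp

lemma hom1_unique:
  fixes p :: "'a::comm_ring_1 poly"
  assumes "rhom \<phi>" "rhom \<psi>" "\<And>c. \<phi> [:c:] = \<psi> [:c:]" "\<phi> [:0,1:] = \<psi> [:0,1:]"
  shows "\<phi> p = \<psi> p"
proof (induction p)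
  case (pCons a p)
  have "\<phi> (pCons a p) = \<phi> [:a:] + \<phi> [:0,1:] * \<phi> p"
    using rhomD[OF assms(1)] pCons_as[of a p] by metis
  moreover have "\<psi> (pCons a p) = \<psi> [:a:] + \<psi> [:0,1:] * \<psi> p"
    using rhomD[OF assms(2)] pCons_as[of a p] by metis
  ultimately show ?case using assms(3,4) pCons.IH by simp
qed (use assms in \<open>simp add: rhomD\<close>)

lemma hom3_unique:
  fixes P :: "'b::comm_ring_1 poly poly poly"
  assumes f: "rhom \<phi>" and g: "rhom \<psi>" and c: "\<And>c. \<phi> (tvC c) = \<psi> (tvC c)"
    and x: "\<phi> tvX = \<psi> tvX" and y: "\<phi> tvY = \<psi> tvY" and z: "\<phi> tvZ = \<psi> tvZ"
  shows "\<phi> P = \<psi> P"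
proof -
  have 1: "\<phi> [:[:r:]:] = \<psi> [:[:r:]:]" for r
    using hom1_unique[of "\<phi> \<circ> (\<lambda>r. [:[:r:]:])" "\<psi> \<circ> (\<lambda>r. [:[:r:]:])" r] c x
      rhom_comp[OF f rhom_comp[OF rhom_const rhom_const]] rhom_comp[OF g rhom_comp[OF rhom_const rhom_const]]
    by (simp add: tvC_def tvX_def o_def)
  have 2: "\<phi> [:q:] = \<psi> [:q:]" for q
    using hom1_unique[of "\<phi> \<circ> (\<lambda>r. [:r:])" "\<psi> \<circ> (\<lambda>r. [:r:])" q] 1 y
      rhom_comp[OF f rhom_const] rhom_comp[OF g rhom_const]
    by (simp add: tvY_def o_def)
  show ?thesis
    using hom1_unique[OF f g] 2 z by (simp add: tvZ_def)
qed

definition sub3 :: "('b::comm_ring_1 \<Rightarrow> 'c::comm_ring_1) \<Rightarrow> 'c \<Rightarrow> 'c \<Rightarrow> 'c \<Rightarrow> 'b poly poly poly \<Rightarrow> 'c" where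
  "sub3 \<iota> a b c = (\<lambda>P. poly P c) \<circ> map_poly ((\<lambda>Q. poly Q b) \<circ> map_poly ((\<lambda>r. poly r a) \<circ> map_poly \<iota>))"

lemma rhom_sub3: "rhom \<iota> \<Longrightarrow> rhom (sub3 \<iota> a b c)"
  unfolding sub3_def
  by (intro rhom_comp rhom_map_poly rhom_poly) auto

lemma map_poly_const': "f 0 = 0 \<Longrightarrow> map_poly f [:a:] = [:f a:]"
  by (simp add: map_poly_pCons)

lemma sub3_simps:
  assumes "rhom \<iota>"
  shows "sub3 \<iota> a b c (tvC x) = \<iota> x" "sub3 \<iota> a b c tvX = a" "sub3 \<iota> a b c tvY = b" "sub3 \<iota> a b c tvZ = c"
  using rhomD[OF assms] rhomD[OF rhom_sub3[OF assms]]
  by (simp_all add: sub3_def tvC_def tvX_def tvY_def tvZ_def map_poly_pCons)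



lemma two_poly: "(2::'c::comm_ring_1) = 0 \<Longrightarrow> (2::'c poly) = 0"
  by (metis numeral_poly pCons_0_0)

lemma two_R: "(2::'b::comm_ring_1) = 0 \<Longrightarrow> (2::'b poly poly poly) = 0"
  by (intro two_poly)

lemma add_self0: "(2::'c::comm_ring_1) = 0 \<Longrightarrow> x + x = (0::'c)"
  by (metis mult_2 mult_zero_left)

lemma minus_self: "(2::'c::comm_ring_1) = 0 \<Longrightarrow> - x = (x::'c)"
  by (metis add_self0 add.inverse_unique)

lemma frob: "(2::'c::comm_ring_1) = 0 \<Longrightarrow> (a + b) ^ (2 ^ k) = a ^ (2 ^ k) + (b::'c) ^ (2 ^ k)"
proof (induction k)
  case (Suc k)
  have "(a + b) ^ (2 ^ Suc k) = ((a + b) ^ (2 ^ k))^2" by (simp add: power_mult[symmetric] mult.commute)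
  also have "\<dots> = (a ^ (2 ^ k) + b ^ (2 ^ k))^2" using Suc by simp
  also have "\<dots> = (a ^ (2 ^ k))^2 + (b ^ (2 ^ k))^2 + 2 * (a ^ (2 ^ k) * b ^ (2 ^ k))"
    by (simp add: power2_eq_square algebra_simps)
  also have "\<dots> = a ^ (2 ^ Suc k) + b ^ (2 ^ Suc k)"
    using Suc.prems by (simp add: power_mult[symmetric] mult.commute)
  finally show ?case .
qed simp

class fgcd = field + factorial_ring_gcd + semiring_gcd_mult_normalize

instance alg_closure :: (field) fgcd ..

definition Nn :: "nat \<Rightarrow> 'b::comm_ring_1 poly poly poly" where
  "Nn j = tvX ^ j + tvY ^ j + tvZ ^ j + (tvX + tvY + tvZ) ^ j"

lemma dvd_yz:
  assumes two: "(2::'b::comm_ring_1) = 0"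
  shows "(tvY + tvZ :: 'b poly poly poly) dvd Nn j"
proof -
  have two2: "(2::'b poly poly) = 0" using two by (intro two_poly)
  have e: "(tvY + tvZ :: 'b poly poly poly) = [:- [:0,1:], 1:]"
    using minus_self[OF two2, of "[:0,1:]"] by (simp add: tvY_def tvZ_def)
  have "poly (Nn j :: 'b poly poly poly) [:0,1:] = 0"
    using add_self0[OF two2] two two_poly[OF two] by (simp add: Nn_def tvX_def tvY_def tvZ_def add.assoc)
  then show ?thesis unfolding e by (simp add: poly_eq_0_iff_dvd)
qed

lemma rhom_tvC: "rhom (tvC :: 'b::comm_ring_1 \<Rightarrow> _)"
  unfolding rhom_def tvC_def by (simp add: one_pCons)

definition swXY :: "'b::comm_ring_1 poly poly poly \<Rightarrow> 'b poly poly poly" where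
  "swXY = sub3 tvC tvY tvX tvZ"
definition swXZ :: "'b::comm_ring_1 poly poly poly \<Rightarrow> 'b poly poly poly" where
  "swXZ = sub3 tvC tvZ tvY tvX"
definition swYZ :: "'b::comm_ring_1 poly poly poly \<Rightarrow> 'b poly poly poly" where
  "swYZ = sub3 tvC tvX tvZ tvY"

lemma rhom_sw: "rhom swXY" "rhom swXZ" "rhom swYZ"
  unfolding swXY_def swXZ_def swYZ_def by (simp_all add: rhom_sub3 rhom_tvC)

lemmas sw_simps = sub3_simps[OF rhom_tvC, folded swXY_def swXZ_def swYZ_def]

lemma sw_gen:
  "swXY tvX = tvY" "swXY tvY = tvX" "swXY tvZ = tvZ" "swXY (tvC c) = tvC c"
  "swXZ tvX = tvZ" "swXZ tvY = tvY" "swXZ tvZ = tvX" "swXZ (tvC c) = tvC c"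
  "swYZ tvX = tvX" "swYZ tvY = tvZ" "swYZ tvZ = tvY" "swYZ (tvC c) = tvC c"
  by (simp_all add: swXY_def swXZ_def swYZ_def sub3_simps[OF rhom_tvC])

lemma sw_invol: "swYZ (swYZ P) = P"
  using hom3_unique[of "swYZ \<circ> swYZ" "\<lambda>x. x" P] rhom_comp[OF rhom_sw(3) rhom_sw(3)] rhom_id
  by (simp add: sw_gen)

lemma sw_N: "swXY (Nn j) = Nn j" "swXZ (Nn j) = Nn j" "swYZ (Nn j) = Nn j"
  by (simp_all add: Nn_def rhomD[OF rhom_sw(1)] rhomD[OF rhom_sw(2)] rhomD[OF rhom_sw(3)]
      rhom_power[OF rhom_sw(1)] rhom_power[OF rhom_sw(2)] rhom_power[OF rhom_sw(3)] sw_gen add_ac)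

lemma dvd_xz:
  assumes two: "(2::'b::comm_ring_1) = 0"
  shows "(tvX + tvZ :: 'b poly poly poly) dvd Nn j"
  using rhom_dvd[OF rhom_sw(1) dvd_yz[OF two, of j]]
  by (simp add: sw_N rhomD[OF rhom_sw(1)] sw_gen)

lemma dvd_xy:
  assumes two: "(2::'b::comm_ring_1) = 0"
  shows "(tvX + tvY :: 'b poly poly poly) dvd Nn j"
  using rhom_dvd[OF rhom_sw(2) dvd_yz[OF two, of j]]
  by (simp add: sw_N rhomD[OF rhom_sw(2)] sw_gen add_ac)

lemma coprime_const_monic:
  fixes a b :: "'b::fgcd poly poly"
  assumes "a \<noteq> 0"
  shows "coprime [:a:] [:b, 1:]"
proof (rule coprimeI)
  fix c assume c1: "c dvd [:a:]" and c2: "c dvd [:b, 1:]"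
  have "degree c = 0"
    using dvd_imp_degree_le[OF c1] assms by simp
  then obtain c0 where c0: "c = [:c0:]" by (metis degree_eq_zeroE)
  have "c0 dvd coeff [:b,1:] 1" using c2 unfolding c0 const_poly_dvd_iff by blast
  then have "c0 dvd 1" by simp
  then show "is_unit c" unfolding c0 by (simp add: is_unit_const_poly_iff)
qed

lemma invol_coprime:
  fixes f :: "'c::{semiring_gcd,comm_ring_1} \<Rightarrow> 'c"
  assumes "rhom f" "\<And>x. f (f x) = x" "coprime a b"
  shows "coprime (f a) (f b)"
proof (rule coprimeI)
  fix c assume "c dvd f a" "c dvd f b"
  then have "f c dvd a" "f c dvd b" using rhom_dvd[OF assms(1)] assms(2) by metis+
  then have "is_unit (f c)" using assms(3) coprime_common_divisor by blast
  then show "is_unit c" using rhom_unit[OF assms(1)] assms(2) by metis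
qed

lemma tv_explicit:
  "(tvX + tvY :: 'b::comm_ring_1 poly poly poly) = [:[:[:0,1:]:] + [:0,1:]:]"
  "(tvX + tvZ :: 'b::comm_ring_1 poly poly poly) = [:[:[:0,1:]:], 1:]"
  "(tvY + tvZ :: 'b::comm_ring_1 poly poly poly) = [:[:0,1:], 1:]"
  by (simp_all add: tvX_def tvY_def tvZ_def)

lemma cop_xy_xz: "coprime (tvX + tvY :: 'b::fgcd poly poly poly) (tvX + tvZ)"
  unfolding tv_explicit by (rule coprime_const_monic) (simp add: pCons_eq_iff)
lemma cop_xy_yz: "coprime (tvX + tvY :: 'b::fgcd poly poly poly) (tvY + tvZ)"
  unfolding tv_explicit by (rule coprime_const_monic) (simp add: pCons_eq_iff)
lemma cop_xz_yz: "coprime (tvX + tvZ :: 'b::fgcd poly poly poly) (tvY + tvZ)"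
  using invol_coprime[OF rhom_sw(3) sw_invol cop_xy_yz]
  by (simp add: rhomD[OF rhom_sw(3)] sw_gen add_ac)

lemma D_dvd_N:
  assumes two: "(2::'b::fgcd) = 0"
  shows "(denom3 :: 'b poly poly poly) dvd Nn j"
  unfolding denom3_def
  by (intro divides_mult dvd_xy dvd_xz dvd_yz two) (use cop_xy_xz cop_xy_yz cop_xz_yz in auto)

lemma D_nz: "(denom3 :: 'b::fgcd poly poly poly) \<noteq> 0"
  unfolding denom3_def tv_explicit by (simp add: pCons_eq_iff)

lemma N_eq: assumes two: "(2::'b::fgcd) = 0"
  shows "Nn j = (denom3 :: 'b poly poly poly) * phi_pow j"
  unfolding phi_pow_def Nn_def[symmetric] using D_dvd_N[OF two] by simp



definition Hm :: "'b::comm_ring_1 poly poly poly \<Rightarrow> 'b poly poly poly poly" where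
  "Hm = sub3 (\<lambda>x. [:tvC x:]) (monom tvX 1) (monom tvY 1) (monom tvZ 1)"

lemma rhom_Hm: "rhom Hm"
  unfolding Hm_def by (intro rhom_sub3 rhom_comp[OF rhom_const rhom_tvC, unfolded o_def])

lemma Hm_gen: "Hm (tvC c) = [:tvC c:]" "Hm tvX = monom tvX 1" "Hm tvY = monom tvY 1" "Hm tvZ = monom tvZ 1"
  unfolding Hm_def by (simp_all add: sub3_simps[OF rhom_comp[OF rhom_const rhom_tvC, unfolded o_def]])

lemma ev1_Hm: "poly (Hm P) 1 = P"
proof -
  have "((\<lambda>A. poly A 1) \<circ> Hm) P = (\<lambda>x. x) P"
    by (rule hom3_unique[OF rhom_comp[OF rhom_poly rhom_Hm] rhom_id]) (simp_all add: Hm_gen poly_monom)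
  then show ?thesis by simp
qed

lemma const_mult_monom: "[:c:] * monom a n = monom (c * a) n"
  by (metis monom_0 mult_monom add_0)

lemma Hm_N: "Hm (Nn j) = monom (Nn j) j"
  by (simp add: Nn_def rhomD[OF rhom_Hm] rhom_power[OF rhom_Hm] Hm_gen monom_power add_monom)

lemma Hm_D: "Hm denom3 = monom denom3 3"
  by (simp add: denom3_def rhomD[OF rhom_Hm] Hm_gen add_monom mult_monom numeral_3_eq_3)

lemma Hm_phi:
  assumes two: "(2::'b::fgcd) = 0"
  shows "Hm (phi_pow j :: 'b poly poly poly) = monom (phi_pow j) (j - 3)"
proof -
  let ?D = "denom3 :: 'b poly poly poly"
  let ?p = "phi_pow j :: 'b poly poly poly"
  have eq0: "monom (Nn j) j = monom ?D 3 * Hm ?p"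
    using arg_cong[OF N_eq[OF two, of j], of Hm] by (simp add: Hm_N Hm_D rhomD[OF rhom_Hm])
  have eq: "monom (?D * ?p) j = monom ?D 3 * Hm ?p"
    using eq0 N_eq[OF two, of j] by simp
  have c: "coeff (monom (?D * ?p) j) n = coeff (monom ?D 3 * Hm ?p) n" for n
    using eq by simp
  have p0: "?p = 0" if "j < 3"
    using c[of j] that D_nz by (auto simp add: coeff_monom_mult)
  show ?thesis
  proof (rule poly_eqI)
    fix n
    have "?D * coeff (Hm ?p) n = (if j = n + 3 then ?D * ?p else 0)"
      using c[of "n+3"] by (simp add: coeff_monom_mult)
    then have "coeff (Hm ?p) n = (if j = n + 3 then ?p else 0)"
      using D_nz by (auto split: if_splits)
    then show "coeff (Hm ?p) n = coeff (monom ?p (j - 3)) n"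
      using p0 by auto
  qed
qed

definition Psi :: "'b::comm_ring_1 poly poly poly poly \<Rightarrow> 'b poly poly poly poly poly" where
  "Psi A = poly (map_poly (\<lambda>c. [:[:c:]:]) A) (monom (monom 1 1) 1)"

lemma rhom_Psi: "rhom Psi"
proof -
  have "rhom ((\<lambda>B. poly B (monom (monom 1 1) 1)) \<circ> map_poly (\<lambda>c. [:[:c:]:]))"
    by (intro rhom_comp rhom_poly rhom_map_poly rhom_comp[OF rhom_const rhom_const, unfolded o_def])
  then show ?thesis unfolding Psi_def o_def by simp
qed

lemma coeff_Psi: "coeff (Psi A) i = monom (coeff A i) i"
proof (induction A arbitrary: i)
  case (pCons a A)
  have "Psi (pCons a A) = [:[:a:]:] + monom (monom 1 1) 1 * Psi A"
    by (simp add: Psi_def map_poly_pCons)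
  then show ?case
    by (cases i) (simp_all add: coeff_monom_mult pCons.IH mult_monom monom_0 coeff_pCons)
qed (simp add: Psi_def)

lemma Hm_homog: "Hm (coeff (Hm P) i) = monom (coeff (Hm P) i) i"
proof -
  have "(map_poly Hm \<circ> Hm) P = (Psi \<circ> Hm) P"
    by (rule hom3_unique[OF rhom_comp[OF rhom_map_poly[OF rhom_Hm] rhom_Hm] rhom_comp[OF rhom_Psi rhom_Hm]])
      (simp_all add: Hm_gen Psi_def map_poly_monom rhomD[OF rhom_Hm] map_poly_pCons mult_monom
        poly_monom const_mult_monom smult_monom)
  then have "coeff (map_poly Hm (Hm P)) i = coeff (Psi (Hm P)) i" by simp
  then show ?thesis by (simp add: coeff_map_poly rhomD[OF rhom_Hm] coeff_Psi)
qed



lemma of_nat_odd2: assumes two: "(2::'c::comm_ring_1) = 0" and k: "k \<ge> 1"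
  shows "(of_nat (2 ^ k + 1) :: 'c) = 1"
proof -
  obtain k' where "k = Suc k'" using k by (cases k) auto
  then have "(of_nat (2 ^ k) :: 'c) = 2 * of_nat (2 ^ k')" by simp
  then show ?thesis using two by simp
qed

lemma pderiv_N:
  assumes two: "(2::'b::field) = 0" and k: "k \<ge> 1"
  shows "pderiv (Nn (2 ^ k + 1) :: 'b poly poly poly) = (tvX + tvY) ^ (2 ^ k)"
proof -
  have two2: "(2::'b poly poly) = 0" using two by (intro two_poly)
  have twoR: "(2::'b poly poly poly) = 0" using two by (intro two_R)
  have on: "(of_nat (2 ^ k + 1) :: 'b poly poly) = 1" using of_nat_odd2[OF two2 k] .
  have dX: "pderiv (tvX :: 'b poly poly poly) = 0" "pderiv (tvY :: 'b poly poly poly) = 0"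
    "pderiv (tvZ :: 'b poly poly poly) = 1"
    by (simp_all add: tvX_def tvY_def tvZ_def pderiv_pCons)
  have e: "2 ^ k + 1 = Suc (2 ^ k)" by simp
  have "pderiv (Nn (2 ^ k + 1) :: 'b poly poly poly) = tvZ ^ (2^k) + (tvX + tvY + tvZ) ^ (2^k)"
    unfolding Nn_def e
    using on k by (simp only: pderiv_add pderiv_power_Suc) (simp add: pderiv_add dX add.commute zero_power)
  also have "\<dots> = (tvX + tvY) ^ (2^k)"
    using frob[OF twoR, of "tvX + tvY" tvZ k] add_self0[OF twoR, of "tvZ ^ 2 ^ k"]
    by (simp add: algebra_simps)
  finally show ?thesis .
qed

lemma xy_nz: "(tvX + tvY :: 'b::field poly poly poly) \<noteq> 0"
  by (simp add: tv_explicit pCons_eq_iff)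

lemma N_nz:
  assumes two: "(2::'b::field) = 0" and k: "k \<ge> 1"
  shows "(Nn (2 ^ k + 1) :: 'b poly poly poly) \<noteq> 0"
  using pderiv_N[OF two k] xy_nz by (metis pderiv_0 power_not_zero)

lemma phid_nz:
  assumes two: "(2::'b::fgcd) = 0" and k: "k \<ge> 1"
  shows "(phi_pow (2 ^ k + 1) :: 'b poly poly poly) \<noteq> 0"
  using N_nz[OF two k] N_eq[OF two] by (metis mult_zero_right)

lemma sq_dvd_pderiv:
  assumes "h * h dvd A"
  shows "h dvd pderiv (A :: 'c::{comm_semiring_1,semiring_no_zero_divisors} poly)"
proof -
  obtain k where A: "A = h * h * k" using assms by (auto simp: dvd_def)
  have "pderiv A = h * (h * pderiv k + k * pderiv h + k * pderiv h)"
    unfolding A by (simp add: pderiv_mult algebra_simps)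
  then show ?thesis by simp
qed

lemma sw_phi: assumes two: "(2::'b::fgcd) = 0"
  shows "swYZ (phi_pow j :: 'b poly poly poly) = phi_pow j"
proof -
  have "swYZ (denom3 :: 'b poly poly poly) = denom3"
    by (simp add: denom3_def rhomD[OF rhom_sw(3)] sw_gen add_ac mult_ac)
  moreover have "swYZ (Nn j :: 'b poly poly poly) = swYZ denom3 * swYZ (phi_pow j)"
    using N_eq[OF two, of j] rhomD(4)[OF rhom_sw(3)] by metis
  ultimately have "denom3 * swYZ (phi_pow j :: 'b poly poly poly) = denom3 * phi_pow j"
    using N_eq[OF two, of j] sw_N(3)[of j] by metis
  then show ?thesis using D_nz by auto
qed

lemma phid_sqfree:
  assumes two: "(2::'b::fgcd) = 0" and k: "k \<ge> 1"
    and LL: "L * L' = (phi_pow (2 ^ k + 1) :: 'b poly poly poly)"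
  shows "coprime L L'"
proof (rule ccontr)
  let ?d = "2 ^ k + 1"
  let ?phi = "phi_pow ?d :: 'b poly poly poly"
  assume "\<not> coprime L L'"
  then obtain c where c: "c dvd L" "c dvd L'" "\<not> is_unit c" by (rule not_coprimeE)
  have "L \<noteq> 0" using LL phid_nz[OF two k] by auto
  then have "c \<noteq> 0" using c by auto
  then obtain h where h: "h dvd c" "prime h" using prime_divisor_exists c(3) by blast
  have hL: "h dvd L" "h dvd L'" using h c dvd_trans by blast+
  have "h * h dvd ?phi" using mult_dvd_mono[OF hL] LL by simp
  then have "h * h dvd Nn ?d" using N_eq[OF two, of ?d] by (metis dvd_mult2 mult.commute)
  then have "h dvd (tvX + tvY) ^ (2 ^ k)" using sq_dvd_pderiv pderiv_N[OF two k] by metis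
  then have hxy: "h dvd tvX + tvY" using prime_dvd_power h(2) by blast
  have hphi: "h dvd ?phi" using hL(1) LL by (metis dvd_mult2)
  let ?t = "swYZ h"
  have t1: "?t dvd tvX + tvZ"
    using rhom_dvd[OF rhom_sw(3) hxy] by (simp add: rhomD[OF rhom_sw(3)] sw_gen)
  have t2: "?t dvd ?phi"
    using rhom_dvd[OF rhom_sw(3) hphi] sw_phi[OF two] by simp
  have "?t * ?t dvd (tvX + tvZ) * ?phi" using mult_dvd_mono[OF t1 t2] .
  moreover have "(tvX + tvZ) * ?phi dvd Nn ?d"
    using N_eq[OF two, of ?d] unfolding denom3_def by (simp add: dvd_def mult_ac)
  ultimately have "?t * ?t dvd Nn ?d" using dvd_trans by blast
  then have t3: "?t dvd (tvX + tvY) ^ (2 ^ k)" using sq_dvd_pderiv pderiv_N[OF two k] by metis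
  have "coprime (tvX + tvZ) ((tvX + tvY :: 'b poly poly poly) ^ (2 ^ k))"
    using cop_xy_xz by (simp add: coprime_commute)
  then have "is_unit ?t" using t1 t3 coprime_common_divisor by blast
  then have "is_unit h" using rhom_unit[OF rhom_sw(3)] sw_invol by metis
  then show False using h(2) not_prime_unit by blast
qed



lemma phi_small:
  assumes two: "(2::'b::fgcd) = 0" and j: "j < 3"
  shows "(phi_pow j :: 'b poly poly poly) = 0"
proof -
  have twoR: "(2::'b poly poly poly) = 0" using two by (intro two_R)
  have "(Nn j :: 'b poly poly poly) = 0"
  proof -
    have "j = 0 \<or> j = 1 \<or> j = 2" using j by auto
    moreover have "(Nn 0 :: 'b poly poly poly) = 0"
      using twoR by (simp add: Nn_def)
    moreover have "(Nn 1 :: 'b poly poly poly) = 0"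
      using add_self0[OF twoR, of "tvX + tvY + tvZ"] by (simp add: Nn_def add.assoc)
    moreover have "(Nn 2 :: 'b poly poly poly) = 0"
    proof -
      have "(Nn 2 :: 'b poly poly poly) = 2 * (tvX^2 + tvY^2 + tvZ^2 + tvX*tvY + tvX*tvZ + tvY*tvZ)"
        by (simp add: Nn_def power2_eq_square algebra_simps)
      then show ?thesis using twoR by simp
    qed
    ultimately show ?thesis by auto
  qed
  then show ?thesis using N_eq[OF two, of j] D_nz by auto
qed

lemma poly_sum_le:
  assumes "degree p \<le> n"
  shows "poly (p :: 'c::comm_semiring_1 poly) x = (\<Sum>i\<le>n. coeff p i * x ^ i)"
  unfolding poly_altdef
  by (rule sum.mono_neutral_left) (use assms in \<open>auto simp: coeff_eq_0\<close>)

lemma eval3_sum: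
  "eval3 f T = (\<Sum>i\<le>degree f. tvC (coeff f i) * T ^ i)"
proof -
  have "degree (map_poly tvC f) \<le> degree f" by (rule map_poly_degree_leq)
  then show ?thesis unfolding eval3_def
    by (subst poly_sum_le[of _ "degree f"]) (auto simp: coeff_map_poly tvC_def)
qed

lemma phi_of_sum:
  assumes two: "(2::'b::fgcd) = 0"
  shows "phi_of (f :: 'b poly) = (\<Sum>i\<le>degree f. tvC (coeff f i) * phi_pow i)"
proof -
  let ?D = "denom3 :: 'b poly poly poly"
  have "eval3 f tvX + eval3 f tvY + eval3 f tvZ + eval3 f (tvX + tvY + tvZ)
      = (\<Sum>i\<le>degree f. tvC (coeff f i) * Nn i)"
    unfolding eval3_sum Nn_def by (simp add: sum.distrib[symmetric] algebra_simps)
  also have "\<dots> = ?D * (\<Sum>i\<le>degree f. tvC (coeff f i) * phi_pow i)"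
    by (simp add: N_eq[OF two] sum_distrib_left mult_ac)
  finally show ?thesis unfolding phi_of_def using D_nz nonzero_mult_div_cancel_left[OF D_nz] by metis
qed

lemma coeff_H_phi_of:
  assumes two: "(2::'b::fgcd) = 0"
  shows "coeff (Hm (phi_of (f :: 'b poly))) e = tvC (coeff f (e+3)) * phi_pow (e+3)"
proof -
  let ?t = "\<lambda>i. tvC (coeff f i) * (phi_pow i :: 'b poly poly poly)"
  have "Hm (phi_of f) = (\<Sum>i\<le>degree f. monom (?t i) (i - 3))"
    unfolding phi_of_sum[OF two]
    by (simp add: rhom_sum[OF rhom_Hm] rhomD[OF rhom_Hm] Hm_gen Hm_phi[OF two] const_mult_monom smult_monom)
  then have "coeff (Hm (phi_of f)) e = (\<Sum>i\<le>degree f. if i - 3 = e then ?t i else 0)"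
    by (simp add: coeff_sum)
  also have "\<dots> = (\<Sum>i\<le>degree f. if i = e + 3 then ?t i else 0)"
    by (rule sum.cong) (auto simp: phi_small[OF two])
  also have "\<dots> = ?t (e + 3)"
    by (auto simp: coeff_eq_0 tvC_def)
  finally show ?thesis .
qed



lemma homog_dvd:
  fixes L p :: "'b::comm_ring_1 poly poly poly"
  assumes "Hm L = monom L s" "Hm p = monom p r" "r < s" "L dvd p"
  shows "p = 0"
proof -
  obtain w where w: "p = L * w" using assms(4) by (auto simp: dvd_def)
  have "monom p r = monom L s * Hm w"
    using assms(1,2) w rhomD(4)[OF rhom_Hm] by metis
  then have "coeff (monom p r) r = coeff (monom L s * Hm w) r" by simp
  then show ?thesis using assms(3) by (simp add: coeff_monom_mult)
qed

lemma gap_step: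
  fixes A B Phi :: "'b::fgcd poly poly poly poly"
  assumes two: "(2::'b) = 0" and AB: "A * B = Phi"
    and dA: "degree A = s" and dB: "degree B = u" and su: "s \<le> u"
    and gap: "\<And>e. n - G < e \<Longrightarrow> e < n \<Longrightarrow> coeff Phi e = 0" and n: "n = s + u" and sG: "s < G"
    and cop: "coprime (coeff A s) (coeff B u)"
    and homA: "\<And>i. Hm (coeff A i) = monom (coeff A i) i"
    and homB: "\<And>i. Hm (coeff B i) = monom (coeff B i) i"
  shows "1 \<le> i \<Longrightarrow> i \<le> s \<Longrightarrow> coeff A (s - i) = 0 \<and> coeff B (u - i) = 0"
proof (induction i rule: less_induct)
  case (less i)
  have twoR: "(2::'b poly poly poly) = 0" using two by (intro two_R)
  define f where "f a = coeff A a * coeff B (n - i - a)" for a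
  have fz: "f a = 0" if "a \<le> n - i" "a \<noteq> s - i" "a \<noteq> s" for a
  proof (cases "s < a")
    case True then show ?thesis by (simp add: f_def coeff_eq_0 dA)
  next
    case False
    show ?thesis
    proof (cases "a < s - i")
      case True
      then have "u < n - i - a" using less.prems n by linarith
      then show ?thesis by (simp add: f_def coeff_eq_0 dB)
    next
      case False
      define i' where "i' = s - a"
      have "1 \<le> i'" "i' < i" "a = s - i'" using False \<open>\<not> s < a\<close> that less.prems unfolding i'_def by auto
      then have "coeff A a = 0" using less.IH[of i'] less.prems by auto
      then show ?thesis by (simp add: f_def)
    qed
  qed
  have "coeff Phi (n - i) = (\<Sum>a\<le>n - i. f a)"
    unfolding AB[symmetric] coeff_mult f_def by simp
  also have "\<dots> = (\<Sum>a\<in>{s - i, s}. f a)"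
    by (rule sum.mono_neutral_right) (use fz less.prems n su in auto)
  also have "\<dots> = f (s - i) + f s" using less.prems by simp
  also have "\<dots> = coeff A (s - i) * coeff B u + coeff A s * coeff B (u - i)"
    unfolding f_def using less.prems n su by (simp add: algebra_simps)
  finally have X: "coeff Phi (n - i) = coeff A (s - i) * coeff B u + coeff A s * coeff B (u - i)" .
  have g1: "n - G < n - i" "n - i < n" using less.prems sG n su by auto
  from gap[OF g1] have "coeff Phi (n - i) = 0" .
  with X have eq: "coeff A (s - i) * coeff B u = coeff A s * coeff B (u - i)"
    by (metis add_eq_0_iff minus_self[OF twoR])
  have "coeff A s dvd coeff A (s - i) * coeff B u" unfolding eq by simp
  then have d1: "coeff A s dvd coeff A (s - i)" using cop coprime_dvd_mult_left_iff by blast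
  have "coeff B u dvd coeff A s * coeff B (u - i)" unfolding eq[symmetric] by simp
  then have d2: "coeff B u dvd coeff B (u - i)" using cop coprime_dvd_mult_right_iff coprime_commute by blast
  have "coeff A (s - i) = 0" by (rule homog_dvd[OF homA homA _ d1]) (use less.prems in auto)
  moreover have "coeff B (u - i) = 0" by (rule homog_dvd[OF homB homB _ d2]) (use less.prems su in auto)
  ultimately show ?case by simp
qed



lemma core:
  fixes P Q phi phid psi c :: "'b::fgcd poly poly poly"
  assumes two: "(2::'b) = 0" and PQ: "P * Q = phi" and deg: "degree (Hm P) \<le> degree (Hm Q)"
    and dphi: "degree (Hm phi) = n" and lc: "coeff (Hm phi) n = phid" and nz: "phid \<noteq> 0"
    and sqf: "\<And>L L'. L * L' = phid \<Longrightarrow> coprime L L'"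
    and gap: "\<And>e. n - G < e \<Longrightarrow> e < n \<Longrightarrow> coeff (Hm phi) e = 0" and nG: "n < 2 * G"
    and e0: "coeff (Hm phi) e0 = c * psi" and cu: "is_unit c" and cop: "coprime psi phid"
  shows "is_unit P"
proof -
  define A where "A = Hm P"
  define B where "B = Hm Q"
  have AB: "A * B = Hm phi" unfolding A_def B_def using PQ rhomD(4)[OF rhom_Hm] by metis
  have "Hm phi \<noteq> 0" using lc nz by auto
  then have A0: "A \<noteq> 0" and B0: "B \<noteq> 0" using AB by auto
  define s where "s = degree A"
  define u where "u = degree B"
  have n: "n = s + u" using degree_mult_eq[OF A0 B0] AB dphi s_def u_def by simp
  have su: "s \<le> u" using deg A_def B_def s_def u_def by simp
  have LL: "coeff A s * coeff B u = phid"
    using lead_coeff_mult[of A B] AB dphi lc s_def u_def by simp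
  have copL: "coprime (coeff A s) (coeff B u)" using sqf[OF LL] .
  have sG: "s < G" using n su nG by linarith
  have low: "coeff A (s - i) = 0" if "1 \<le> i" "i \<le> s" for i
    using gap_step[OF two AB s_def[symmetric] u_def[symmetric] su gap n sG copL] that
      Hm_homog[of P] Hm_homog[of Q] unfolding A_def B_def by blast
  have Aeq: "A = monom (coeff A s) s"
  proof (rule poly_eqI)
    fix m
    show "coeff A m = coeff (monom (coeff A s) s) m"
    proof (cases "m < s")
      case True
      then show ?thesis using low[of "s - m"] by auto
    next
      case False
      then show ?thesis by (cases "m = s") (auto simp: coeff_eq_0 s_def)
    qed
  qed
  define L where "L = coeff A s"
  have "L dvd coeff (Hm phi) e0"
    unfolding AB[symmetric] by (subst Aeq) (simp add: coeff_monom_mult L_def)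
  then have "L dvd psi" using e0 cu by (simp add: dvd_mult_unit_iff')
  moreover have "L dvd phid" using LL L_def by (metis dvd_triv_left)
  ultimately have "is_unit L" using cop coprime_common_divisor by blast
  moreover have "P = L" using ev1_Hm[of P] Aeq unfolding A_def L_def by (metis poly_monom power_one mult_1_right)
  ultimately show ?thesis by simp
qed



theorem mainTheorem8:
  fixes g :: "'a::{field,finite} poly" and k m :: nat
  assumes q: "card (UNIV :: 'a set) = 2 ^ m"
    and k: "k \<ge> 2"
    and deg_g: "degree g \<le> 2 ^ (k - 1) + 1"
    and hyp: "\<exists>j. coeff g j \<noteq> 0
               \<and> (phi_pow j :: 'a alg_closure poly poly poly) \<noteq> 0
               \<and> coprime (phi_pow j :: 'a alg_closure poly poly poly) (phi_pow (2 ^ k + 1))"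
  shows "irreducible (phi_of (map_poly to_ac (monom 1 (2 ^ k + 1) + g)))"
proof -
  have two0: "(2::'a) = 0"
  proof -
    have "CHAR('a) dvd 2 ^ m" using CHAR_dvd_CARD q by metis
    then obtain i where i: "i \<le> m" "CHAR('a) = 2 ^ i"
      using divides_primepow_nat[OF two_is_prime_nat] by blast
    have "i \<noteq> 0" using i CHAR_not_1' by (metis One_nat_def power_0)
    then obtain i' where i': "i = Suc i'" by (cases i) auto
    have "(of_nat (2 ^ i) :: 'a) = 0" using i(2) of_nat_CHAR by metis
    then have "(2::'a) ^ i = 0" by simp
    then show ?thesis by simp
  qed
  have two: "(2::'a alg_closure) = 0" using arg_cong[OF two0, of to_ac] by simp
  define K :: nat where "K = 2 ^ (k - 1)"
  obtain k2 where k2: "k = k2 + 2" using k by (metis add.commute le_Suc_ex)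
  have K2: "K \<ge> 2" unfolding K_def k2 by simp
  have pk: "2 ^ k = 2 * K" unfolding K_def k2 by simp
  define F where "F = map_poly to_ac (monom 1 (2 ^ k + 1) + g)"
  have cF: "coeff F i = (if i = 2 * K + 1 then 1 else 0) + to_ac (coeff g i)" for i
    unfolding F_def by (simp add: coeff_map_poly pk)
  have gz: "coeff g i = 0" if "i > K + 1" for i
    using deg_g that unfolding K_def by (simp add: coeff_eq_0)
  define phi where "phi = phi_of F"
  define n where "n = 2 * K - 2"
  have cH: "coeff (Hm phi) e = tvC (coeff F (e+3)) * phi_pow (e+3)" for e
    unfolding phi_def by (rule coeff_H_phi_of[OF two])
  have k1: "k \<ge> 1" using k by simp
  have phid: "(phi_pow (2 * K + 1) :: 'a alg_closure poly poly poly) \<noteq> 0"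
    using phid_nz[OF two k1] pk by simp
  have n3: "n + 3 = 2 * K + 1" using K2 unfolding n_def by simp
  have tvC1: "tvC 1 = (1 :: 'a alg_closure poly poly poly)" by (simp add: tvC_def one_pCons)
  have lcH: "coeff (Hm phi) n = phi_pow (2 * K + 1)"
    unfolding cH n3 cF using gz[of "2*K+1"] K2 by (simp add: tvC1)
  have dH: "degree (Hm phi) = n"
  proof (rule antisym)
    show "degree (Hm phi) \<le> n"
    proof (rule degree_le, intro allI impI)
      fix i assume "n < i"
      then have "i + 3 \<noteq> 2 * K + 1" "K + 1 < i + 3" using n3 by auto
      then show "coeff (Hm phi) i = 0" by (simp add: cH cF gz tvC_def)
    qed
    show "n \<le> degree (Hm phi)" by (rule le_degree) (use lcH phid in simp)
  qed
  have gap: "coeff (Hm phi) e = 0" if "n - K < e" "e < n" for e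
    using that K2 unfolding cH cF n_def by (auto simp: gz tvC_def)
  have nG: "n < 2 * K" unfolding n_def using K2 by simp
  obtain j where j: "coeff g j \<noteq> 0" "(phi_pow j :: 'a alg_closure poly poly poly) \<noteq> 0"
    "coprime (phi_pow j :: 'a alg_closure poly poly poly) (phi_pow (2 ^ k + 1))"
    using hyp by blast
  have j3: "j \<ge> 3" using j(2) phi_small[OF two] by (meson not_le)
  have jK: "j \<le> K + 1" using j(1) gz by (meson not_le)
  have e0: "coeff (Hm phi) (j - 3) = tvC (to_ac (coeff g j)) * phi_pow j"
    using j3 jK K2 unfolding cH cF by simp
  have cu: "is_unit (tvC (to_ac (coeff g j)) :: 'a alg_closure poly poly poly)"
  proof -
    have nz: "to_ac (coeff g j) \<noteq> 0" using j(1) by simp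
    show ?thesis unfolding tvC_def using nz by (simp add: is_unit_const_poly_iff dvd_field_iff)
  qed
  have sqf: "coprime L L'" if "L * L' = phi_pow (2 * K + 1)" for L L' :: "'a alg_closure poly poly poly"
    using phid_sqfree[OF two k1, of L L'] that pk by simp
  have cop: "coprime (phi_pow j) (phi_pow (2 * K + 1) :: 'a alg_closure poly poly poly)"
    using j(3) pk by simp
  have unitP: "is_unit P" if "P * Q = phi" "degree (Hm P) \<le> degree (Hm Q)" for P Q
    by (rule core[OF two that dH lcH phid sqf gap nG e0 cu cop])
  show ?thesis
    unfolding F_def[symmetric] phi_def[symmetric]
  proof (rule irreducibleI)
    show "phi \<noteq> 0"
    proof
      assume "phi = 0"
      then have "Hm phi = 0" using rhomD(1)[OF rhom_Hm] by metis
      then show False using lcH phid by simp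
    qed
    show "\<not> is_unit phi"
    proof
      assume "is_unit phi"
      then have "is_unit (Hm phi)" by (rule rhom_unit[OF rhom_Hm])
      then have "degree (Hm phi) = 0" by (auto simp: is_unit_poly_iff)
      then show False using dH K2 unfolding n_def by simp
    qed
    fix a b assume "phi = a * b"
    then show "is_unit a \<or> is_unit b"
      using unitP[of a b] unitP[of b a] by (metis mult.commute nat_le_linear)
  qed
qed

end
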